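(* As $p\to0$, $U(p)=\dfrac{p}{(\log 2)^2}+\Theta(p^2)$, where $U(p):=\min_{r\in[2,\infty)}\dfrac{1}{r\,|\log(1-(1-p)^{r-1})|}$.
   Context: $\log$ is the natural logarithm; $p\in(0,1)$. *)

theory Defs
  imports Complex_Main "HOL-Library.Landau_Symbols"
begin

text \<open>U(p) := min over real r in [2,oo) of 1 / (r * |ln (1 - (1-p)^(r-1))|),
  rendered as the infimum of the attained values (equals the minimum whenever it exists).\<close>
definition U :: "real \<Rightarrow> real" where
  "U p = (INF r\<in>{2..}. 1 / (r * \<bar>ln (1 - (1 - p) powr (r - 1))\<bar>))"

end

theory Submission
  imports Defs "HOL-Real_Asymp.Real_Asymp" "HOL-Analysis.Analysis"
begin

lemma ln_ge_aux: "0 < (z::real) \<Longrightarrow> 1 - 1/z \<le> ln z"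
proof -
  assume z: "0 < z"
  have "ln (1/z) \<le> 1/z - 1" using ln_le_minus_one[of "1/z"] z by simp
  moreover have "ln (1/z) = - ln z" using z by (simp add: ln_div)
  ultimately show ?thesis by simp
qed

lemma D_aux:
  fixes x :: real
  assumes "0 < x" "x \<le> 1/2"
  shows "x * ln x \<le> (1-x) * ln (1-x)"
proof -
  define y where "y = 1 - x"
  have y: "0 < y" "x \<le> y" using assms by (auto simp: y_def)
  have "1 - 1/(y/x) \<le> ln (y/x)" using ln_ge_aux[of "y/x"] y assms by simp
  hence 1: "1 - x/y \<le> ln y - ln x" using y assms by (simp add: ln_div)
  have 2: "0 \<le> ln y + 1/y - 1" using ln_ge_aux[of y] y by simp
  have 3: "x*(1-x/y) = (y-x)*(1/y - 1)" using y by (simp add: y_def field_simps)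
  have "y * ln y - x * ln x = (y-x) * ln y + x * (ln y - ln x)" by (simp add: algebra_simps)
  also have "\<dots> \<ge> (y-x) * ln y + x * (1 - x/y)"
    using 1 assms by (simp add: mult_left_mono)
  also have "(y-x) * ln y + x * (1 - x/y) = (y-x) * (ln y + 1/y - 1)"
    using 3 by (simp add: algebra_simps)
  also have "\<dots> \<ge> 0" using 2 y by simp
  finally show ?thesis by (simp add: y_def)
qed

lemma hmono:
  fixes x :: real
  assumes "0 < x" "x \<le> 1/2"
  shows "ln x * ln (1-x) \<le> (ln 2)^2"
proof -
  have "(\<lambda>t. ln t * ln (1-t)) x \<le> (\<lambda>t. ln t * ln (1-t)) (1/2)"
  proof (rule DERIV_nonneg_imp_increasing_open[OF assms(2)])
    fix t :: real assume t: "x < t" "t < 1/2"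
    hence tp: "0 < t" "t < 1" using assms by auto
    have "((\<lambda>t. ln t * ln (1-t)) has_real_derivative (1/t * ln(1-t) + ln t * (-1/(1-t)))) (at t)"
      using tp by (auto intro!: derivative_eq_intros simp: field_simps)
    moreover have "0 \<le> 1/t * ln(1-t) + ln t * (-1/(1-t))"
    proof -
      have "1/t * ln(1-t) + ln t * (-1/(1-t)) = ((1-t)*ln(1-t) - t * ln t)/(t*(1-t))"
        using tp by (simp add: field_simps)
      also have "\<dots> \<ge> 0" using D_aux[of t] t tp by (intro divide_nonneg_pos) auto
      finally show ?thesis .
    qed
    ultimately show "\<exists>y. ((\<lambda>t. ln t * ln (1-t)) has_real_derivative y) (at t) \<and> 0 \<le> y" by blast
  next
    show "continuous_on {x..1/2} (\<lambda>t. ln t * ln (1-t))"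
      using assms by (auto intro!: continuous_intros)
  qed
  also have "\<dots> = (ln 2)^2" by (simp add: ln_div power2_eq_square)
  finally show ?thesis by simp
qed

lemma hmax:
  fixes x :: real
  assumes "0 < x" "x < 1"
  shows "ln x * ln (1-x) \<le> (ln 2)^2"
proof (cases "x \<le> 1/2")
  case True thus ?thesis using hmono assms by auto
next
  case False
  hence "ln (1-x) * ln (1-(1-x)) \<le> (ln 2)^2" using hmono[of "1-x"] assms by auto
  thus ?thesis by (simp add: mult.commute)
qed

lemma ylny: "0 < (y::real) \<Longrightarrow> y * ln (1/y) \<le> 2/5"
proof -
  assume y: "0 < y"
  have e: "5/2 \<le> exp (1::real)" using exp_lower_Taylor_quadratic[of 1] by simp
  have "ln (1/y / exp 1) \<le> 1/y/exp 1 - 1" using ln_le_minus_one[of "1/y/exp 1"] y by simp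
  hence "ln (1/y) \<le> 1/(y * exp 1)" using y by (simp add: ln_div ln_mult)
  hence "y * ln (1/y) \<le> y * (1/(y * exp 1))" using y by (intro mult_left_mono) auto
  also have "\<dots> = 1 / exp 1" using y by simp
  also have "\<dots> \<le> 2/5" using e by (simp add: divide_simps)
  finally show ?thesis .
qed


lemma key:
  fixes p r :: real
  assumes p: "0 < p" "p \<le> 1/8" and small: "(-ln(1-p)) * ln(1/p) \<le> 1/100" and r: "r \<ge> 2"
  shows "-ln(1-p)/((ln 2)^2 + 4*ln 2*(-ln(1-p))) \<le> 1/(r*\<bar>ln(1-(1-p) powr (r-1))\<bar>)"
proof -
  define q where "q = 1 - p"
  define L where "L = - ln q"
  define x where "x = q powr (r-1)"
  define k where "k = - ln (1-x)"
  have q: "0 < q" "q < 1" using p by (auto simp: q_def)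
  have L: "0 < L" using q by (simp add: L_def)
  have x0: "0 < x" using q by (simp add: x_def)
  have "q powr (r-1) \<le> q powr 1" using q r by (intro powr_mono') auto
  hence xq: "x \<le> q" using q by (simp add: x_def)
  have lnx: "ln x = (r-1) * ln q" using q by (simp add: x_def ln_powr)
  have px: "p \<le> 1 - x" using xq by (simp add: q_def)
  have lnneg: "ln (1-x) < 0" using x0 px p by simp
  have kabs: "\<bar>ln (1-(1-p) powr (r-1))\<bar> = k" using lnneg by (simp add: k_def x_def q_def)
  have k0: "0 < k" using lnneg by (simp add: k_def)
  have rL: "r * L = L - ln x" using lnx by (simp add: L_def algebra_simps)
  have ln2: "2/3 \<le> ln (2::real)" by (rule ln2_ge_two_thirds)
  have claim: "(- ln x) * k + L * k \<le> (ln 2)^2 + 4 * ln 2 * L"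
  proof (cases "x \<le> 15/16")
    case True
    have h: "(- ln x) * k \<le> (ln 2)^2" using hmax[of x] x0 xq q by (simp add: k_def)
    have "ln (1/16) \<le> ln (1-x)" using True x0 by (subst ln_le_cancel_iff) auto
    moreover have "ln (1/16::real) = - (4 * ln 2)"
      using ln_realpow[of 2 4] by (simp add: ln_div)
    ultimately have "k \<le> 4 * ln 2" by (simp add: k_def)
    hence "L * k \<le> L * (4 * ln 2)" using L by (intro mult_left_mono) auto
    thus ?thesis using h by (simp add: algebra_simps)
  next
    case False
    have "1 - 1/x \<le> ln x" by (rule ln_ge_aux[OF x0])
    hence "- ln x \<le> (1-x)/x" using x0 by (simp add: field_simps)
    also have "\<dots> = (1-x) * (1/x)" by simp
    also have "\<dots> \<le> (1-x) * (16/15)"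
    proof (rule mult_left_mono)
      show "1/x \<le> 16/15" using False x0 by (simp add: field_simps)
      show "0 \<le> 1 - x" using px p by simp
    qed
    also have "\<dots> = (16/15) * (1-x)" by simp
    finally have a1: "- ln x \<le> (16/15) * (1-x)" .
    have "(- ln x) * k \<le> ((16/15) * (1-x)) * k" using a1 k0 by (intro mult_right_mono) auto
    also have "\<dots> = (16/15) * ((1-x) * ln (1/(1-x)))" using px p by (simp add: k_def ln_div)
    also have "\<dots> \<le> (16/15) * (2/5)" using ylny[of "1-x"] px p by simp
    finally have a2: "(- ln x) * k \<le> 32/75" by simp
    have "ln p \<le> ln (1-x)" using px p by simp
    hence "k \<le> ln (1/p)" using p by (simp add: k_def ln_div)
    hence "L * k \<le> L * ln (1/p)" using L by (intro mult_left_mono) auto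
    also have "\<dots> \<le> 1/100" using small by (simp add: L_def q_def)
    finally have a3: "L * k \<le> 1/100" .
    have "(4/9::real) \<le> (ln 2)^2" using ln2 power_mono[of "2/3::real" "ln 2" 2] by (simp add: power2_eq_square)
    moreover have "0 \<le> 4 * ln 2 * L" using L by simp
    ultimately show ?thesis using a2 a3 by linarith
  qed
  have "r * k * L = (r * L) * k" by (simp add: algebra_simps)
  also have "\<dots> = (L - ln x) * k" by (simp only: rL)
  also have "\<dots> = (- ln x) * k + L * k" by (simp add: algebra_simps)
  finally have rkL: "r * k * L \<le> (ln 2)^2 + 4 * ln 2 * L" using claim by simp
  have pos: "0 < (ln 2)^2 + 4 * ln 2 * L" using L ln2 by (intro add_pos_nonneg) auto
  have rk: "0 < r * k" using r k0 by simp
  have "L / ((ln 2)^2 + 4 * ln 2 * L) \<le> 1 / (r * k)"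
    using rkL pos rk L by (simp add: divide_simps mult.commute mult.left_commute)
  thus ?thesis by (simp add: kabs L_def q_def)
qed


lemma Ulow:
  fixes p :: real
  assumes p: "0 < p" "p \<le> 1/8" and small: "(-ln(1-p)) * ln(1/p) \<le> 1/100"
  shows "-ln(1-p)/((ln 2)^2 + 4*ln 2*(-ln(1-p))) \<le> U p"
  unfolding U_def
  by (rule cINF_greatest) (use key[OF p small] in auto)

lemma Uup:
  fixes p :: real
  assumes p: "0 < p" "p \<le> 1/2"
  shows "U p \<le> -ln(1-p)/((ln 2)^2 + ln 2*(-ln(1-p)))"
proof -
  define L where "L = - ln (1-p)"
  have L: "0 < L" using p by (simp add: L_def)
  have "ln (1/2) \<le> ln (1-p)" using p by (subst ln_le_cancel_iff) auto
  hence Lle: "L \<le> ln 2" by (simp add: L_def ln_div)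
  define r0 where "r0 = 1 + ln 2 / L"
  have r0: "r0 \<in> {2..}" using Lle L by (simp add: r0_def field_simps)
  have "(1-p) powr (r0 - 1) = exp (ln 2 / L * ln (1-p))" using p by (simp add: r0_def powr_def)
  also have "ln 2 / L * ln (1-p) = - ln 2" using L by (simp add: L_def field_simps)
  also have "exp (- ln 2) = (1/2::real)" by (simp add: exp_minus)
  finally have x: "(1-p) powr (r0 - 1) = 1/2" .
  have bdd: "bdd_below ((\<lambda>r. 1 / (r * \<bar>ln (1 - (1 - p) powr (r - 1))\<bar>)) ` {2..})"
    by (rule bdd_belowI[of _ 0]) auto
  have "U p \<le> 1 / (r0 * \<bar>ln (1 - (1 - p) powr (r0 - 1))\<bar>)"
    unfolding U_def by (rule cINF_lower[OF bdd r0])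
  also have "\<dots> = 1 / (r0 * ln 2)" by (simp add: x ln_div)
  also have "\<dots> = L / ((ln 2)^2 + ln 2 * L)" using L by (simp add: r0_def field_simps power2_eq_square)
  finally show ?thesis by (simp add: L_def)
qed

theorem claim1:
  shows "(\<lambda>p. U p - p / (ln 2)^2) \<in> \<Theta>[at_right 0](\<lambda>p. p^2)"
proof -
  define c1 :: real where "c1 = inverse ((ln 2)\<^sup>2) / 2 - inverse ((ln 2)\<^sup>2) * (inverse ((ln 2)\<^sup>2) * (4 * ln 2))"
  define c2 :: real where "c2 = inverse ((ln 2)\<^sup>2) / 2 - inverse ((ln 2)\<^sup>2) * (inverse ((ln 2)\<^sup>2) * (ln 2))"
  have T1: "((\<lambda>p::real. (-ln(1-p)/((ln 2)^2 + 4*ln 2*(-ln(1-p))) - p/(ln 2)^2)/p^2) \<longlongrightarrow> c1) (at_right 0)"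
    unfolding c1_def by real_asymp
  have T2: "((\<lambda>p::real. (-ln(1-p)/((ln 2)^2 + ln 2*(-ln(1-p))) - p/(ln 2)^2)/p^2) \<longlongrightarrow> c2) (at_right 0)"
    unfolding c2_def by real_asymp
  have T3: "((\<lambda>p::real. -ln(1-p) * ln(1/p)) \<longlongrightarrow> 0) (at_right 0)"
    by real_asymp
  have ln2: "2/3 \<le> ln (2::real)" by (rule ln2_ge_two_thirds)
  have ln2': "ln (2::real) < 1" by (rule ln_2_less_1)
  have c1: "c1 < 0"
  proof -
    have "inverse ((ln 2)\<^sup>2) * (inverse ((ln 2)\<^sup>2) * (4 * ln 2)) = inverse ((ln 2)\<^sup>2) * (4 / ln (2::real))"
      using ln2 by (simp add: field_simps power2_eq_square)
    moreover have "1/2 < 4 / ln (2::real)" using ln2 ln2' by (simp add: field_simps)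
    moreover have "0 < inverse ((ln (2::real))\<^sup>2)" using ln2 by simp
    ultimately have "c1 = inverse ((ln 2)\<^sup>2) * (1/2 - 4 / ln (2::real))"
      unfolding c1_def by (simp add: right_diff_distrib)
    thus ?thesis using \<open>1/2 < 4 / ln (2::real)\<close> \<open>0 < inverse ((ln (2::real))\<^sup>2)\<close>
      by (simp add: mult_pos_neg)
  qed
  have c2: "c2 < 0"
  proof -
    have "inverse ((ln 2)\<^sup>2) * (inverse ((ln 2)\<^sup>2) * (ln 2)) = inverse ((ln 2)\<^sup>2) * (1 / ln (2::real))"
      using ln2 by (simp add: field_simps power2_eq_square)
    moreover have "1/2 < 1 / ln (2::real)" using ln2 ln2' by (simp add: field_simps)
    moreover have "0 < inverse ((ln (2::real))\<^sup>2)" using ln2 by simp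
    ultimately have "c2 = inverse ((ln 2)\<^sup>2) * (1/2 - 1 / ln (2::real))"
      unfolding c2_def by (simp add: right_diff_distrib)
    thus ?thesis using \<open>1/2 < 1 / ln (2::real)\<close> \<open>0 < inverse ((ln (2::real))\<^sup>2)\<close>
      by (simp add: mult_pos_neg)
  qed
  have E1: "eventually (\<lambda>p. (-ln(1-p)/((ln 2)^2 + 4*ln 2*(-ln(1-p))) - p/(ln 2)^2)/p^2 > 2*c1) (at_right (0::real))"
    by (rule order_tendstoD(1)[OF T1]) (use c1 in simp)
  have E2: "eventually (\<lambda>p. (-ln(1-p)/((ln 2)^2 + ln 2*(-ln(1-p))) - p/(ln 2)^2)/p^2 < c2/2) (at_right (0::real))"
    by (rule order_tendstoD(2)[OF T2]) (use c2 in simp)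
  have E3: "eventually (\<lambda>p. -ln(1-p) * ln(1/p) < 1/100) (at_right (0::real))"
    by (rule order_tendstoD(2)[OF T3]) simp
  have E4: "eventually (\<lambda>p. 0 < p \<and> p \<le> (1/8::real)) (at_right 0)"
    unfolding eventually_at_right_field by (rule exI[of _ "1/8"]) auto
  show ?thesis
  proof (rule bigthetaI'[of "-c2/2" "-2*c1"])
    show "0 < -c2/2" "0 < -2*c1" using c1 c2 by auto
    show "eventually (\<lambda>p. - c2 / 2 * norm (p^2) \<le> norm (U p - p / (ln 2)^2) \<and>
             norm (U p - p / (ln 2)^2) \<le> - 2 * c1 * norm (p^2)) (at_right 0)"
      using E1 E2 E3 E4
    proof eventually_elim
      case (elim p)
      hence p: "0 < p" "p \<le> 1/8" by auto
      have p2: "0 < p^2" using p by simp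
      have lo: "-ln(1-p)/((ln 2)^2 + 4*ln 2*(-ln(1-p))) \<le> U p"
        using Ulow[of p] elim by auto
      have up: "U p \<le> -ln(1-p)/((ln 2)^2 + ln 2*(-ln(1-p)))"
        using Uup[of p] p by auto
      have a: "-ln(1-p)/((ln 2)^2 + 4*ln 2*(-ln(1-p))) - p/(ln 2)^2 > 2*c1*p^2"
        using elim p2 by (simp add: field_simps)
      have b: "-ln(1-p)/((ln 2)^2 + ln 2*(-ln(1-p))) - p/(ln 2)^2 < c2/2*p^2"
        using elim p2 by (simp add: field_simps)
      have "U p - p/(ln 2)^2 < c2/2*p^2" using up b by linarith
      moreover have "c2/2*p^2 < 0" using c2 p2 by (simp add: mult_neg_pos)
      moreover have "U p - p/(ln 2)^2 > 2*c1*p^2" using lo a by linarith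
      ultimately show ?case by (simp add: abs_if)
    qed
  qed
qed

end
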